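(* Let $a>0$, $N>0$, $a_1=a$, $a_2=0$, $a_3=-a$, and let $n_1,n_2,n_3\ge 1$ be integers with $n=n_1+n_2+n_3$. Let $\omega_j(x)=e^{-N(x^2/2-a_jx)}$, $j=1,2,3$. Let $P_{n_1,n_2,n_3}(x)=x^n+\dots$ be the monic polynomial of degree $n$ satisfying $\int_{\mathbb R}P_{n_1,n_2,n_3}(x)x^k\omega_j(x)\,dx=0$ for $0\le k\le n_j-1$, $j=1,2,3$. Put $h^{(j)}_{k_1,k_2,k_3}=\int_{\mathbb R}P_{k_1,k_2,k_3}(x)x^{k_j}\omega_j(x)\,dx$ and $c_1=-2\pi i/h^{(1)}_{n_1-1,n_2,n_3}$, $c_2=-2\pi i/h^{(2)}_{n_1,n_2-1,n_3}$, $c_3=-2\pi i/h^{(3)}_{n_1,n_2,n_3-1}$ (these $h$'s are nonzero). Let $Y$ be the $4\times4$ matrix $$Y=\begin{pmatrix}P_{n_1,n_2,n_3}&C(P_{n_1,n_2,n_3}\omega_1)&C(P_{n_1,n_2,n_3}\omega_2)&C(P_{n_1,n_2,n_3}\omega_3)\\ c_1P_{n_1-1,n_2,n_3}&c_1C(P_{n_1-1,n_2,n_3}\omega_1)&c_1C(P_{n_1-1,n_2,n_3}\omega_2)&c_1C(P_{n_1-1,n_2,n_3}\omega_3)\\ c_2P_{n_1,n_2-1,n_3}&\cdots&&\\ c_3P_{n_1,n_2,n_3-1}&\cdots&&\end{pmatrix}$$ (rows 3 and 4 built as row 2 with $(P_{n_1,n_2-1,n_3},c_2)$ resp. $(P_{n_1,n_2,n_3-1},c_3)$),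 where $Cf(z)=\frac{1}{2\pi i}\int_{\mathbb R}\frac{f(s)}{s-z}ds$. Define, for $z\in\mathbb C\setminus\mathbb R$, $$\Psi(z)=\mathrm{diag}(1,c_1^{-1},c_2^{-1},c_3^{-1})\,Y(z)\,\mathrm{diag}\big(e^{-Nz^2/2},e^{-Na_1z},e^{-Na_2z},e^{-Na_3z}\big).$$ Then $$\Psi'(z)=N\begin{pmatrix}-z&\frac{n_1}{N}&\frac{n_2}{N}&\frac{n_3}{N}\\-1&-a&0&0\\-1&0&0&0\\-1&0&0&a\end{pmatrix}\Psi(z),\qquad z\in\mathbb C\setminus\mathbb R .$$
   Context: $Y$ is the unique solution of the Riemann–Hilbert problem: $Y$ analytic on $\mathbb C\setminus\mathbb R$, $Y_+(x)=Y_-(x)\begin{pmatrix}1&\omega_1(x)&\omega_2(x)&\omega_3(x)\\0&1&0&0\\0&0&1&0\\0&0&0&1\end{pmatrix}$ for $x\in\mathbb R$ (boundary values from the upper/lower half plane), and $Y(z)=(I+O(1/z))\,\mathrm{diag}(z^n,z^{-n_1},z^{-n_2},z^{-n_3})$ as $z\to\infty$. The prime denotes $d/dz$. *)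

theory Defs
  imports "HOL-Analysis.Analysis" "HOL-Computational_Algebra.Polynomial"
begin

definition shift :: "real \<Rightarrow> nat \<Rightarrow> real" where
  "shift a j = (if j = 1 then a else if j = 2 then 0 else - a)"

definition wt :: "real \<Rightarrow> real \<Rightarrow> nat \<Rightarrow> real \<Rightarrow> real" where
  "wt a N j x = exp (- N * (x^2 / 2 - shift a j * x))"

definition sel :: "nat \<Rightarrow> nat \<Rightarrow> nat \<Rightarrow> nat \<Rightarrow> nat" where
  "sel j k1 k2 k3 = (if j = 1 then k1 else if j = 2 then k2 else k3)"

definition mop :: "real \<Rightarrow> real \<Rightarrow> nat \<Rightarrow> nat \<Rightarrow> nat \<Rightarrow> real poly" where
  "mop a N k1 k2 k3 = (THE p. degree p = k1 + k2 + k3 \<and> lead_coeff p = 1 \<and>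
     (\<forall>j\<in>{1,2,3}. \<forall>k < sel j k1 k2 k3.
        (\<integral>x. poly p x * x ^ k * wt a N j x \<partial>lborel) = 0))"

definition hh :: "real \<Rightarrow> real \<Rightarrow> nat \<Rightarrow> nat \<Rightarrow> nat \<Rightarrow> nat \<Rightarrow> real" where
  "hh a N j k1 k2 k3 =
     (\<integral>x. poly (mop a N k1 k2 k3) x * x ^ (sel j k1 k2 k3) * wt a N j x \<partial>lborel)"

definition cauchy_tr :: "(real \<Rightarrow> complex) \<Rightarrow> complex \<Rightarrow> complex" where
  "cauchy_tr f z = (1 / (2 * of_real pi * \<i>)) * (\<integral>s. f s / (of_real s - z) \<partial>lborel)"

text \<open>4x4 matrices as functions on indices 0..3.\<close>
definition mmul :: "(nat \<Rightarrow> nat \<Rightarrow> complex) \<Rightarrow> (nat \<Rightarrow> nat \<Rightarrow> complex) \<Rightarrow> nat \<Rightarrow> nat \<Rightarrow> complex" where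
  "mmul A B i j = (\<Sum>k<4. A i k * B k j)"

definition diag4 :: "(nat \<Rightarrow> complex) \<Rightarrow> nat \<Rightarrow> nat \<Rightarrow> complex" where
  "diag4 d i j = (if i = j then d i else 0)"

definition cc :: "real \<Rightarrow> real \<Rightarrow> nat \<Rightarrow> nat \<Rightarrow> nat \<Rightarrow> nat \<Rightarrow> complex" where
  "cc a N n1 n2 n3 j =
     (if j = 1 then - 2 * of_real pi * \<i> / of_real (hh a N 1 (n1 - 1) n2 n3)
      else if j = 2 then - 2 * of_real pi * \<i> / of_real (hh a N 2 n1 (n2 - 1) n3)
      else - 2 * of_real pi * \<i> / of_real (hh a N 3 n1 n2 (n3 - 1)))"

definition rowpoly :: "real \<Rightarrow> real \<Rightarrow> nat \<Rightarrow> nat \<Rightarrow> nat \<Rightarrow> nat \<Rightarrow> real poly" where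
  "rowpoly a N n1 n2 n3 r =
     (if r = 0 then mop a N n1 n2 n3
      else if r = 1 then mop a N (n1 - 1) n2 n3
      else if r = 2 then mop a N n1 (n2 - 1) n3
      else mop a N n1 n2 (n3 - 1))"

definition rowfac :: "real \<Rightarrow> real \<Rightarrow> nat \<Rightarrow> nat \<Rightarrow> nat \<Rightarrow> nat \<Rightarrow> complex" where
  "rowfac a N n1 n2 n3 r = (if r = 0 then 1 else cc a N n1 n2 n3 r)"

definition Ymat :: "real \<Rightarrow> real \<Rightarrow> nat \<Rightarrow> nat \<Rightarrow> nat \<Rightarrow> complex \<Rightarrow> nat \<Rightarrow> nat \<Rightarrow> complex" where
  "Ymat a N n1 n2 n3 z r col =
     rowfac a N n1 n2 n3 r *
     (if col = 0 then poly (map_poly of_real (rowpoly a N n1 n2 n3 r)) z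
      else cauchy_tr (\<lambda>s. of_real (poly (rowpoly a N n1 n2 n3 r) s * wt a N col s)) z)"

definition Psi :: "real \<Rightarrow> real \<Rightarrow> nat \<Rightarrow> nat \<Rightarrow> nat \<Rightarrow> complex \<Rightarrow> nat \<Rightarrow> nat \<Rightarrow> complex" where
  "Psi a N n1 n2 n3 z =
     mmul (mmul (diag4 (\<lambda>i. if i = 0 then 1 else inverse (cc a N n1 n2 n3 i)))
                (Ymat a N n1 n2 n3 z))
          (diag4 (\<lambda>i. if i = 0 then exp (- of_real N * z^2 / 2)
                      else exp (- of_real N * of_real (shift a i) * z)))"

definition Amat :: "real \<Rightarrow> real \<Rightarrow> nat \<Rightarrow> nat \<Rightarrow> nat \<Rightarrow> complex \<Rightarrow> nat \<Rightarrow> nat \<Rightarrow> complex" where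
  "Amat a N n1 n2 n3 z i j = of_real N *
     (if i = 0 then (if j = 0 then - z else if j = 1 then of_nat n1 / of_real N
                     else if j = 2 then of_nat n2 / of_real N else of_nat n3 / of_real N)
      else if j = 0 then -1
      else if i = 1 \<and> j = 1 then - of_real a
      else if i = 3 \<and> j = 3 then of_real a
      else 0)"

end

theory Submission
  imports Defs "HOL-Computational_Algebra.Polynomial_Factorial" "HOL-Computational_Algebra.Field_as_Ring"
    "HOL-Probability.Distributions" "HOL-Real_Asymp.Real_Asymp"
begin


lemma funpow_pderiv_zero: "degree p < m \<Longrightarrow> (pderiv ^^ m) (p::real poly) = 0"
proof (induction m arbitrary: p)
  case 0 then show ?case by simp
next
  case (Suc m)
  have e: "(pderiv ^^ Suc m) p = (pderiv ^^ m) (pderiv p)" by (simp add: funpow_swap1)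
  show ?case
  proof (cases m)
    case 0 with Suc.prems show ?thesis using e by (simp add: pderiv_eq_0_iff)
  next
    case (Suc m') then show ?thesis using e Suc.IH[of "pderiv p"] Suc.prems by (simp add: degree_pderiv)
  qed
qed

lemma funpow_pderiv_add: "(pderiv ^^ m) (p + q) = (pderiv ^^ m) p + (pderiv ^^ m) (q::real poly)"
  by (induction m) (auto simp: pderiv_add)
lemma funpow_pderiv_smult: "(pderiv ^^ m) (smult c p) = smult c ((pderiv ^^ m) (p::real poly))"
  by (induction m) (auto simp: pderiv_smult)
lemma funpow_pderiv_diff: "(pderiv ^^ m) (p - q) = (pderiv ^^ m) p - (pderiv ^^ m) (q::real poly)"
  by (induction m) (auto simp: pderiv_diff)
lemma funpow_pderiv_comm: "(pderiv ^^ m) (pderiv p) = pderiv ((pderiv ^^ m) (p::real poly))"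
  by (simp add: funpow_swap1)
lemma smult_sum_r: "smult c (\<Sum>k\<in>A. f k) = (\<Sum>k\<in>A. smult c (f k :: real poly))"
  by (induction A rule: infinite_finite_induct) (auto simp: smult_add_right)
lemma pderiv_sum': "pderiv (\<Sum>k\<in>A. f k) = (\<Sum>k\<in>A. pderiv (f k :: real poly))"
  by (induction A rule: infinite_finite_induct) (auto simp: pderiv_add)

lemma funpow_pderiv_x: "(pderiv ^^ m) ([:0,1:] * p) = [:0,1:] * (pderiv ^^ m) p + smult (of_nat m) ((pderiv ^^ (m - 1)) (p::real poly))"
proof (induction m)
  case 0 then show ?case by simp
next
  case (Suc m)
  show ?case
  proof (cases m)
    case 0 then show ?thesis by (simp add: pderiv_mult pderiv_pCons)
  next
    case (Suc m')
    have "(pderiv ^^ Suc m) ([:0,1:] * p) = pderiv ((pderiv ^^ m) ([:0,1:] * p))" by simp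
    also have "\<dots> = pderiv ([:0,1:] * (pderiv ^^ m) p + smult (of_nat m) ((pderiv ^^ (m - 1)) p))"
      by (simp only: Suc.IH)
    also have "\<dots> = (pderiv ^^ m) p + [:0,1:] * (pderiv ^^ Suc m) p + smult (of_nat m) ((pderiv ^^ m) p)"
      using Suc by (simp add: pderiv_add pderiv_mult pderiv_smult pderiv_pCons)
    also have "\<dots> = [:0,1:] * (pderiv ^^ Suc m) p + smult (of_nat (Suc m)) ((pderiv ^^ m) (p::real poly))"
      by (simp add: algebra_simps smult_add_left)
    finally show ?thesis by simp
  qed
qed

lemma coeff_funpow_pderiv: "\<exists>c. coeff ((pderiv ^^ m) p) n = c * coeff (p::real poly) (n + m)"
proof (induction m arbitrary: n)
  case 0 then show ?case by auto
next
  case (Suc m)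
  obtain c where "coeff ((pderiv ^^ m) p) (Suc n) = c * coeff p (Suc n + m)" using Suc by blast
  then show ?case by (auto simp: coeff_pderiv intro!: exI[of _ "of_nat (Suc n) * c"])
qed

definition Hs :: "real \<Rightarrow> nat \<Rightarrow> real poly \<Rightarrow> real poly" where
  "Hs N B p = (\<Sum>k<B. smult (1 / ((2*N)^k * fact k)) ((pderiv ^^ (2*k)) p))"
definition Hop :: "real \<Rightarrow> real poly \<Rightarrow> real poly" where
  "Hop N p = Hs N (Suc (degree p)) p"

lemma Hs_eq: assumes "degree p < B" shows "Hs N B p = Hop N p"
proof -
  have "Hs N B p = (\<Sum>k<Suc (degree p). smult (1 / ((2*N)^k * fact k)) ((pderiv ^^ (2*k)) p))"
    unfolding Hs_def
    by (rule sum.mono_neutral_right) (use assms in \<open>auto intro!: funpow_pderiv_zero\<close>)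
  then show ?thesis by (simp add: Hop_def Hs_def)
qed

lemma Hs_add: "Hs N B (p + q) = Hs N B p + Hs N B q"
  by (simp add: Hs_def funpow_pderiv_add sum.distrib smult_add_right)
lemma Hs_diff: "Hs N B (p - q) = Hs N B p - Hs N B q"
  by (simp add: Hs_def funpow_pderiv_diff sum_subtractf smult_diff_right)
lemma Hs_smult: "Hs N B (smult c p) = smult c (Hs N B p)"
  by (simp add: Hs_def funpow_pderiv_smult smult_sum_r algebra_simps)

lemma Hop_add: "Hop N (p + q) = Hop N p + Hop N q"
proof -
  define B where "B = Suc (degree p + degree q)"
  have "degree (p+q) < B" "degree p < B" "degree q < B" unfolding B_def
    using degree_add_le_max[of p q] by auto
  then show ?thesis using Hs_add[of N B p q] by (simp add: Hs_eq)
qed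
lemma Hop_smult: "Hop N (smult c p) = smult c (Hop N p)"
proof -
  have "degree (smult c p) < Suc (degree p)" by (simp add: le_imp_less_Suc)
  then have "Hop N (smult c p) = Hs N (Suc (degree p)) (smult c p)" by (rule Hs_eq[symmetric])
  also have "\<dots> = smult c (Hop N p)" by (simp only: Hs_smult Hop_def)
  finally show ?thesis .
qed

lemma Hop_diff: "Hop N (p - q) = Hop N p - Hop N q"
proof -
  have "Hop N (p - q) = Hop N (p + smult (-1) q)" by simp
  also have "\<dots> = Hop N p + smult (-1) (Hop N q)" by (simp only: Hop_add Hop_smult)
  also have "\<dots> = Hop N p - Hop N q" by simp
  finally show ?thesis .
qed
lemma Hop_pderiv: "Hop N (pderiv p) = pderiv (Hop N p)"
proof -
  have "degree (pderiv p) < Suc (degree p)" by (simp add: degree_pderiv)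
  then have "Hop N (pderiv p) = Hs N (Suc (degree p)) (pderiv p)" by (simp add: Hs_eq)
  then show ?thesis unfolding Hs_def Hop_def by (simp only: pderiv_sum' pderiv_smult funpow_pderiv_comm)
qed

lemma coeff_Hop: assumes "n \<ge> degree p" shows "coeff (Hop N p) n = coeff p n"
proof -
  have "coeff (Hop N p) n = (\<Sum>k<Suc (degree p). (1 / ((2*N)^k * fact k)) * coeff ((pderiv ^^ (2*k)) p) n)"
    by (simp add: Hop_def Hs_def coeff_sum)
  also have "\<dots> = (\<Sum>k\<in>{0}. (1 / ((2*N)^k * fact k)) * coeff ((pderiv ^^ (2*k)) p) n)"
  proof (rule sum.mono_neutral_right)
    show "\<forall>i\<in>{..<Suc (degree p)} - {0}. 1 / ((2 * N) ^ i * fact i) * coeff ((pderiv ^^ (2 * i)) p) n = 0"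
    proof
      fix i assume "i \<in> {..<Suc (degree p)} - {0}"
      then have "i > 0" by auto
      obtain c where "coeff ((pderiv ^^ (2*i)) p) n = c * coeff p (n + 2*i)"
        using coeff_funpow_pderiv by blast
      moreover have "coeff p (n + 2*i) = 0" using \<open>i>0\<close> assms by (intro coeff_eq_0) auto
      ultimately show "1 / ((2 * N) ^ i * fact i) * coeff ((pderiv ^^ (2 * i)) p) n = 0" by simp
    qed
  qed auto
  finally show ?thesis by simp
qed

lemma degree_Hop: "degree (Hop N p) = degree p"
proof (cases "p = 0")
  case True then show ?thesis by (simp add: Hop_def Hs_def)
next
  case False
  have "degree (Hop N p) \<le> degree p"
  proof (rule degree_le, intro allI impI)
    fix i assume "degree p < i"
    then show "coeff (Hop N p) i = 0" by (simp add: coeff_Hop coeff_eq_0)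
  qed
  moreover have "coeff (Hop N p) (degree p) \<noteq> 0" using False by (simp add: coeff_Hop)
  ultimately show ?thesis using le_degree by (meson antisym)
qed

lemma lead_Hop: "lead_coeff (Hop N p) = lead_coeff p"
  by (simp only: degree_Hop coeff_Hop order_refl)

lemma Hop_eq0: "Hop N p = 0 \<longleftrightarrow> p = 0"
proof
  assume h: "Hop N p = 0"
  have "lead_coeff p = 0" using lead_Hop[of N p] h by simp
  then show "p = 0" by simp
next
  assume "p = 0"
  then have "degree p = 0" by simp
  have "coeff (Hop N p) n = 0" for n using coeff_Hop[of p n N] \<open>p = 0\<close> by simp
  then show "Hop N p = 0" by (simp add: poly_eq_iff)
qed

lemma Hop_inj: "Hop N p = Hop N q \<Longrightarrow> p = q"
  using Hop_diff[of N p q] Hop_eq0[of N "p - q"] by simp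

lemma Hop_const: "Hop N [:b:] = [:b:]"
proof (rule poly_eqI)
  fix n show "coeff (Hop N [:b:]) n = coeff [:b:] n" by (rule coeff_Hop) simp
qed

lemma Hop_surj: "\<exists>p. Hop N p = G"
proof (induction "degree G" arbitrary: G rule: less_induct)
  case less
  show ?case
  proof (cases "Hop N G = G")
    case True then show ?thesis by blast
  next
    case False
    have "degree (G - Hop N G) < degree G"
    proof (cases "degree G")
      case 0 then have "[:coeff G 0:] = G" by (rule degree_0_id)
      then have "Hop N G = G" using Hop_const[of N "coeff G 0"] by simp
      then show ?thesis using False by simp
    next
      case (Suc d)
      have "\<forall>i>d. coeff (G - Hop N G) i = 0" using Suc by (simp add: coeff_Hop)
      then have "degree (G - Hop N G) \<le> d" by (rule degree_le)
      then show ?thesis using Suc by simp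
    qed
    then obtain r where "Hop N r = G - Hop N G" using less by blast
    then have "Hop N (G + r) = G" by (simp add: Hop_add)
    then show ?thesis by blast
  qed
qed

lemma c_step: fixes N::real assumes "N \<noteq> 0"
  shows "1 / ((2*N)^Suc k * fact (Suc k)) * of_nat (2*Suc k) = (1/N) * (1 / ((2*N)^k * fact k))"
proof -
  have e: "(2*N)^Suc k * fact (Suc k) = N * ((2*N)^k * fact k) * of_nat (2 * Suc k)"
    by (simp add: fact_Suc algebra_simps)
  have "of_nat (2 * Suc k) \<noteq> (0::real)" by (simp del: of_nat_Suc)
  then show ?thesis unfolding e by simp
qed

lemma Hop_x: assumes "N \<noteq> 0"
  shows "Hop N ([:0,1:] * p) = [:0,1:] * Hop N p + smult (1/N) (pderiv (Hop N p))"
proof -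
  define d where "d = degree p"
  define c where "c = (\<lambda>k::nat. 1 / ((2*N)^k * fact k))"
  have dx: "degree ([:0,1:] * p) < Suc (Suc d)" unfolding d_def
    using degree_mult_le[of "[:0,1:]" p] by simp
  have "Hop N ([:0,1:] * p) = Hs N (Suc (Suc d)) ([:0,1:] * p)" using dx by (simp add: Hs_eq)
  also have "\<dots> = (\<Sum>k<Suc (Suc d). smult (c k) ([:0,1:] * (pderiv ^^ (2*k)) p))
                 + (\<Sum>k<Suc (Suc d). smult (c k * of_nat (2*k)) ((pderiv ^^ (2*k - 1)) p))"
    unfolding Hs_def sum.distrib[symmetric]
    by (rule sum.cong) (simp_all only: funpow_pderiv_x c_def smult_add_right smult_smult of_nat_mult)
  also have "(\<Sum>k<Suc (Suc d). smult (c k) ([:0,1:] * (pderiv ^^ (2*k)) p)) = [:0,1:] * Hs N (Suc (Suc d)) p"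
    unfolding Hs_def c_def by (simp only: sum_distrib_left mult_smult_right)
  also have "Hs N (Suc (Suc d)) p = Hop N p" by (simp add: Hs_eq d_def)
  also have "(\<Sum>k<Suc (Suc d). smult (c k * of_nat (2*k)) ((pderiv ^^ (2*k - 1)) p))
       = (\<Sum>k<Suc d. smult (c (Suc k) * of_nat (2*Suc k)) ((pderiv ^^ (2*Suc k - 1)) p))"
    by (subst sum.lessThan_Suc_shift) simp
  also have "\<dots> = (\<Sum>k<Suc d. smult (1/N) (pderiv (smult (c k) ((pderiv ^^ (2*k)) p))))"
  proof (rule sum.cong)
    fix k assume "k \<in> {..<Suc d}"
    have "c (Suc k) * of_nat (2*Suc k) = (1/N) * c k" using c_step[OF assms]
      by (simp only: c_def)
    moreover have "(pderiv ^^ (2*Suc k - 1)) p = pderiv ((pderiv ^^ (2*k)) p)" by simp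
    ultimately show "smult (c (Suc k) * of_nat (2*Suc k)) ((pderiv ^^ (2*Suc k - 1)) p) =
       smult (1/N) (pderiv (smult (c k) ((pderiv ^^ (2*k)) p)))" by (simp add: pderiv_smult)
  qed simp
  also have "\<dots> = smult (1/N) (pderiv (Hop N p))"
    unfolding Hop_def Hs_def c_def d_def by (simp only: pderiv_sum' smult_sum_r)
  finally show ?thesis .
qed


definition gw :: "real \<Rightarrow> real \<Rightarrow> real \<Rightarrow> real" where
  "gw N c x = exp (- N * (x^2/2 - c*x))"

lemma gw_normal: assumes "N > 0"
  shows "gw N c x = exp (N*c^2/2) * sqrt (2*pi/N) * normal_density c (1 / sqrt N) x"
proof -
  have s: "(1 / sqrt N)^2 = 1/N" using assms by (simp add: power_divide)
  have a: "1 / sqrt (2 * pi * (1/N)) = 1 / sqrt (2*pi/N)" by simp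
  have "sqrt (2*pi/N) > 0" using assms by simp
  then have b: "sqrt (2*pi/N) * (1 / sqrt (2*pi/N)) = 1" by (metis divide_self_if less_irrefl times_divide_eq_right mult_1_right)
  have c: "- N * (x^2/2 - c*x) = N*c^2/2 + (- ((x - c)^2) / (2 * (1/N)))"
    using assms by (simp add: field_simps power2_eq_square)
  show ?thesis unfolding normal_density_def s a gw_def c exp_add
    using b assms by (simp add: algebra_simps)
qed

lemma integral_gw: assumes "N > 0" shows "(\<integral>x. gw N c x \<partial>lborel) = exp (N*c^2/2) * sqrt (2*pi/N)"
  using assms by (simp add: gw_normal)

lemma integral_gw_pos: assumes "N > 0" shows "(\<integral>x. gw N c x \<partial>lborel) > 0"
  using assms by (simp add: integral_gw)

lemma integrable_poly_gw: assumes "N > 0"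
  shows "integrable lborel (\<lambda>x. poly p x * gw N c x)"
proof -
  define q where "q = pcompose p [:c,1:]"
  define K where "K = exp (N*c^2/2) * sqrt (2*pi/N)"
  have e: "poly p x * gw N c x = (\<Sum>i\<le>degree q. (coeff q i * K) * (normal_density c (1 / sqrt N) x * (x - c)^i))" for x
  proof -
    have "poly p x * gw N c x = poly q (x - c) * (K * normal_density c (1 / sqrt N) x)"
      using assms by (simp add: q_def poly_pcompose gw_normal K_def)
    also have "\<dots> = (\<Sum>i\<le>degree q. (coeff q i * K) * (normal_density c (1 / sqrt N) x * (x - c)^i))"
      by (simp only: poly_altdef sum_distrib_right) (simp add: mult_ac)
    finally show ?thesis .
  qed
  show ?thesis unfolding e
    by (rule Bochner_Integration.integrable_sum) (use assms in \<open>intro integrable_mult_right integrable_normal_moment; simp\<close>)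
qed

lemma integrable_gw: assumes "N > 0" shows "integrable lborel (gw N c)"
  using integrable_poly_gw[OF assms, of 1 c] by simp

lemma decay_poly_gw: assumes "N > 0"
  shows "((\<lambda>x. poly p x * gw N c x) \<longlongrightarrow> 0) at_top" "((\<lambda>x. poly p x * gw N c x) \<longlongrightarrow> 0) at_bot"
proof -
  have m1: "((\<lambda>x::real. x^k * exp (- N * (x^2/2 - c*x))) \<longlongrightarrow> 0) at_top" for k
    using assms by real_asymp
  have m2: "((\<lambda>x::real. x^k * exp (- N * (x^2/2 - c*x))) \<longlongrightarrow> 0) at_bot" for k
    using assms by real_asymp
  have e: "poly p x * gw N c x = (\<Sum>i\<le>degree p. coeff p i * (x^i * exp (- N * (x^2/2 - c*x))))" for x
    by (simp add: poly_altdef gw_def sum_distrib_right algebra_simps)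
  show "((\<lambda>x. poly p x * gw N c x) \<longlongrightarrow> 0) at_top" unfolding e
    using tendsto_sum[of "{..degree p}" "\<lambda>i x. coeff p i * (x^i * exp (- N * (x^2/2 - c*x)))" "\<lambda>_. 0" at_top]
      tendsto_mult_right_zero[OF m1] by simp
  show "((\<lambda>x. poly p x * gw N c x) \<longlongrightarrow> 0) at_bot" unfolding e
    using tendsto_sum[of "{..degree p}" "\<lambda>i x. coeff p i * (x^i * exp (- N * (x^2/2 - c*x)))" "\<lambda>_. 0" at_bot]
      tendsto_mult_right_zero[OF m2] by simp
qed

lemma FTC_R:
  fixes F f :: "real \<Rightarrow> 'a::euclidean_space"
  assumes "\<And>x. (F has_vector_derivative f x) (at x)" "\<And>x. isCont f x" "integrable lborel f"
    "(F \<longlongrightarrow> 0) at_top" "(F \<longlongrightarrow> 0) at_bot"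
  shows "(\<integral>x. f x \<partial>lborel) = 0"
proof -
  have "(LBINT x=-\<infinity>..\<infinity>. f x) = 0 - 0"
  proof (rule interval_integral_FTC_integrable)
    show "set_integrable lborel (einterval (-\<infinity>) \<infinity>) f"
      using assms(3) by (simp add: set_integrable_def)
    show "((F \<circ> real_of_ereal) \<longlongrightarrow> 0) (at_right (-\<infinity>))"
      using assms(5) by (simp add: ereal_tendsto_simps1)
    show "((F \<circ> real_of_ereal) \<longlongrightarrow> 0) (at_left \<infinity>)"
      using assms(4) by (simp add: ereal_tendsto_simps1)
  qed (use assms in auto)
  then show ?thesis
    by (simp add: interval_lebesgue_integral_def set_lebesgue_integral_def)
qed

lemma ibp_real: assumes "N > 0"
  shows "(\<integral>x. poly (pderiv p) x * gw N c x \<partial>lborel) = N * (\<integral>x. poly ([:-c,1:] * p) x * gw N c x \<partial>lborel)"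
proof -
  define f where "f x = poly (pderiv p) x * gw N c x - N * (poly ([:-c,1:] * p) x * gw N c x)" for x
  have gd: "(gw N c has_real_derivative (- N * (x - c)) * gw N c x) (at x)" for x
  proof -
    have "((\<lambda>x::real. x^2/2 - c*x) has_real_derivative (x - c)) (at x)"
      using DERIV_diff[OF DERIV_divide[OF DERIV_pow[of 2 x] DERIV_const[of 2]] DERIV_cmult[OF DERIV_ident, of c]]
      by simp
    then have "((\<lambda>x. - N * (x^2/2 - c*x)) has_real_derivative (- N * (x - c))) (at x)"
      using DERIV_cmult by blast
    from DERIV_exp[THEN DERIV_chain2, OF this] show ?thesis unfolding gw_def by (simp add: mult_ac)
  qed
  have d: "((\<lambda>x. poly p x * gw N c x) has_vector_derivative f x) (at x)" for x
  proof -
    have "((\<lambda>x. poly p x * gw N c x) has_real_derivative f x) (at x)"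
      using DERIV_mult[OF poly_DERIV[of p x] gd[of x]] unfolding f_def by (simp add: algebra_simps)
    then show ?thesis by (simp add: has_real_derivative_iff_has_vector_derivative)
  qed
  have i1: "integrable lborel (\<lambda>x. poly (pderiv p) x * gw N c x)" by (rule integrable_poly_gw[OF assms])
  have i2: "integrable lborel (\<lambda>x. N * (poly ([:-c,1:] * p) x * gw N c x))"
    by (intro integrable_mult_right integrable_poly_gw[OF assms])
  have "(\<integral>x. f x \<partial>lborel) = 0"
  proof (rule FTC_R[OF d])
    show "isCont f x" for x unfolding f_def gw_def by (intro continuous_intros) auto
    show "integrable lborel f" unfolding f_def using i1 i2 by (rule Bochner_Integration.integrable_diff)
  qed (use decay_poly_gw[OF assms] in auto)
  then have "(\<integral>x. poly (pderiv p) x * gw N c x \<partial>lborel) - (\<integral>x. N * (poly ([:-c,1:] * p) x * gw N c x) \<partial>lborel) = 0"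
    unfolding f_def using i1 i2 by (simp add: Bochner_Integration.integral_diff)
  then show ?thesis by simp
qed

lemma moment_Hop: assumes "N > 0"
  shows "(\<integral>x. poly p x * gw N c x \<partial>lborel) = (\<integral>x. gw N c x \<partial>lborel) * poly (Hop N p) c"
proof (induction "degree p" arbitrary: p rule: less_induct)
  case less
  show ?case
  proof (cases "degree p = 0")
    case True
    define b where "b = coeff p 0"
    have pb: "p = [:b:]" unfolding b_def using degree_0_id[OF True] by simp
    have "(\<integral>x. poly p x * gw N c x \<partial>lborel) = (\<integral>x. b * gw N c x \<partial>lborel)" by (simp add: pb)
    also have "\<dots> = b * (\<integral>x. gw N c x \<partial>lborel)" by simp
    finally show ?thesis by (simp add: pb Hop_const)
  next
    case False
    obtain b q where p: "p = pCons b q" by (cases p)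
    have dq: "degree q < degree p" using False p by auto
    have dq': "degree (pderiv q) < degree p" using dq by (simp add: degree_pderiv)
    have iq: "integrable lborel (\<lambda>x. poly q x * gw N c x)" by (rule integrable_poly_gw[OF assms])
    have ixq: "integrable lborel (\<lambda>x. x * (poly q x * gw N c x))"
      using integrable_poly_gw[OF assms, of "[:0,1:] * q" c] by (simp add: algebra_simps)
    have ig: "integrable lborel (\<lambda>x. b * gw N c x)" by (intro integrable_mult_right integrable_gw[OF assms])
    have ip: "poly p x * gw N c x = b * gw N c x + x * (poly q x * gw N c x)" for x
      by (simp add: p algebra_simps)
    have ibp: "(\<integral>x. poly (pderiv q) x * gw N c x \<partial>lborel) =
        N * ((\<integral>x. x * (poly q x * gw N c x) \<partial>lborel) - c * (\<integral>x. poly q x * gw N c x \<partial>lborel))"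
    proof -
      have "(\<integral>x. poly ([:-c,1:] * q) x * gw N c x \<partial>lborel) =
          (\<integral>x. x * (poly q x * gw N c x) - c * (poly q x * gw N c x) \<partial>lborel)"
        by (simp add: algebra_simps)
      also have "\<dots> = (\<integral>x. x * (poly q x * gw N c x) \<partial>lborel) - c * (\<integral>x. poly q x * gw N c x \<partial>lborel)"
        using ixq iq by (simp add: Bochner_Integration.integral_diff)
      finally show ?thesis using ibp_real[OF assms, of q c] by simp
    qed
    have "(\<integral>x. poly p x * gw N c x \<partial>lborel) = b * (\<integral>x. gw N c x \<partial>lborel) + (\<integral>x. x * (poly q x * gw N c x) \<partial>lborel)"
      unfolding ip using ig ixq by (simp add: Bochner_Integration.integral_add)
    also have "(\<integral>x. x * (poly q x * gw N c x) \<partial>lborel) =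
        c * (\<integral>x. poly q x * gw N c x \<partial>lborel) + (1/N) * (\<integral>x. poly (pderiv q) x * gw N c x \<partial>lborel)"
      using ibp assms by (simp add: field_simps)
    also have "\<dots> = (\<integral>x. gw N c x \<partial>lborel) * (c * poly (Hop N q) c + (1/N) * poly (Hop N (pderiv q)) c)"
      using less(1)[OF dq] less(1)[OF dq'] by (simp add: algebra_simps)
    also have "Hop N p = [:b:] + ([:0,1:] * Hop N q + smult (1/N) (pderiv (Hop N q)))"
    proof -
      have "p = [:b:] + [:0,1:] * q" by (simp add: p)
      then have "Hop N p = Hop N [:b:] + Hop N ([:0,1:] * q)" by (simp only: Hop_add)
      then show ?thesis using Hop_x[of N q] assms by (simp only: Hop_const)
    qed
    then have "poly (Hop N p) c = b + (c * poly (Hop N q) c + (1/N) * poly (Hop N (pderiv q)) c)"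
      by (simp add: Hop_pderiv)
    ultimately show ?thesis by (simp add: algebra_simps)
  qed
qed


definition Tm :: "real \<Rightarrow> real poly \<Rightarrow> real poly" where
  "Tm N f = [:0,1:] * f + smult (1/N) (pderiv f)"

lemma Hop_xpow: assumes "N \<noteq> 0" shows "Hop N ([:0,1:]^k * p) = (Tm N ^^ k) (Hop N p)"
proof (induction k)
  case 0 then show ?case by simp
next
  case (Suc k)
  have "Hop N ([:0,1:]^Suc k * p) = Hop N ([:0,1:] * ([:0,1:]^k * p))" by (simp add: mult.assoc)
  also have "\<dots> = Tm N (Hop N ([:0,1:]^k * p))" using Hop_x[OF assms] by (simp add: Tm_def)
  finally show ?case using Suc by simp
qed

lemma pderiv_lin: "pderiv [:-c,1:] = (1::real poly)"
  by (simp add: pderiv_pCons)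

lemma Tm_dvd: assumes "[:-c,1:]^Suc r dvd G" shows "[:-c,1:]^r dvd Tm N G"
proof -
  obtain Q where G: "G = [:-c,1:]^Suc r * Q" using assms by blast
  have d: "pderiv G = [:-c,1:]^Suc r * pderiv Q + Q * (smult (of_nat (Suc r)) ([:-c,1:]^r) * pderiv [:-c,1:])"
    unfolding G by (simp only: pderiv_mult pderiv_power_Suc)
  have l: "[:-c,1:]^r dvd [:-c,1:]^Suc r" by (rule le_imp_power_dvd) simp
  have "[:-c,1:]^r dvd pderiv G" unfolding d
    by (intro dvd_add dvd_mult2 dvd_mult dvd_smult l dvd_refl)
  moreover have "[:-c,1:]^r dvd G" using l assms dvd_trans by blast
  then have "[:-c,1:]^r dvd [:0,1:] * G" by (rule dvd_mult)
  ultimately show ?thesis unfolding Tm_def by (intro dvd_add dvd_smult)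
qed

lemma Tm_step: "Tm N ([:-c,1:]^Suc s * R) = [:-c,1:]^s * ([:0,1:]*[:-c,1:]*R + smult (1/N) ([:-c,1:]*pderiv R + smult (of_nat (Suc s)) R))"
proof -
  define L where "L = [:-c,1:]"
  define X where "X = ([:0,1:] :: real poly)"
  have dL: "pderiv L = 1" unfolding L_def by (rule pderiv_lin)
  have "Tm N (L^Suc s * R) = X * (L^Suc s * R) + smult (1/N) (L^Suc s * pderiv R + R * (smult (of_nat (Suc s)) (L^s) * pderiv L))"
    unfolding Tm_def X_def by (simp only: pderiv_mult pderiv_power_Suc)
  also have "\<dots> = L^s * (X*L*R + smult (1/N) (L*pderiv R + smult (of_nat (Suc s)) R))"
    unfolding dL by (simp add: algebra_simps smult_add_right)
  finally show ?thesis unfolding L_def X_def .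
qed

lemma Tm_pow_dvd: assumes "[:-c,1:]^m dvd G" "k \<le> m" shows "[:-c,1:]^(m-k) dvd (Tm N ^^ k) G"
  using assms(2)
proof (induction k)
  case 0 then show ?case using assms(1) by simp
next
  case (Suc k)
  then have "[:-c,1:]^Suc (m - Suc k) dvd (Tm N ^^ k) G" using Suc by (simp add: Suc_diff_Suc)
  then show ?case by (simp add: Tm_dvd)
qed

lemma arith_help: fixes S N F fr q :: real assumes "S \<noteq> 0" "N \<noteq> 0" "F \<noteq> 0"
  shows "(1/N) * S * ((fr / (S*F)) / N^k * q) = (fr / F) / N^Suc k * q"
  using assms by (simp add: field_simps)

lemma Tm_eval: assumes "k \<le> r" and N0: "N \<noteq> 0"
  shows "\<exists>R. (Tm N ^^ k) ([:-c,1:]^r * Q) = [:-c,1:]^(r-k) * R \<and>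
            poly R c = (fact r / fact (r-k)) / N^k * poly Q c"
  using assms
proof (induction k)
  case 0 then show ?case by auto
next
  case (Suc k)
  then obtain R where R: "(Tm N ^^ k) ([:-c,1:]^r * Q) = [:-c,1:]^(r-k) * R"
     "poly R c = (fact r / fact (r-k)) / N^k * poly Q c" by auto
  define s where "s = r - Suc k"
  have rk: "r - k = Suc s" using Suc.prems s_def by simp
  define R2 where "R2 = [:0,1:] * [:-c,1:] * R + smult (1/N) ([:-c,1:] * pderiv R + smult (of_nat (Suc s)) R)"
  have "(Tm N ^^ Suc k) ([:-c,1:]^r * Q) = Tm N ([:-c,1:]^Suc s * R)" using R(1) rk by simp
  also have "\<dots> = [:-c,1:]^s * R2"
    unfolding R2_def by (rule Tm_step)
  finally have e: "(Tm N ^^ Suc k) ([:-c,1:]^r * Q) = [:-c,1:]^(r - Suc k) * R2" by (simp add: s_def)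
  have "poly R2 c = (1/N) * of_nat (Suc s) * poly R c" by (simp add: R2_def)
  also have "\<dots> = (fact r / fact (r - Suc k)) / N^Suc k * poly Q c"
  proof -
    have "fact (r - k) = (of_nat (Suc s) :: real) * fact (r - Suc k)" using rk s_def by simp
    moreover have "fact (r - Suc k) \<noteq> (0::real)" by simp
    moreover have "(of_nat (Suc s)::real) \<noteq> 0" by (simp del: of_nat_Suc)
    ultimately show ?thesis using R(2) N0 arith_help[of "of_nat (Suc s)" N "fact (r - Suc k)" "fact r" k "poly Q c"]
      by metis
  qed
  finally show ?case using e by blast
qed

lemma orth_dvd_iff: assumes "N \<noteq> 0"
  shows "(\<forall>k<m. poly ((Tm N ^^ k) G) c = 0) \<longleftrightarrow> [:-c,1:]^m dvd G"
proof
  assume "[:-c,1:]^m dvd G"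
  then show "\<forall>k<m. poly ((Tm N ^^ k) G) c = 0"
  proof (intro allI impI)
    fix k assume "k < m"
    have "[:-c,1:]^(m-k) dvd (Tm N ^^ k) G" using Tm_pow_dvd \<open>[:-c,1:]^m dvd G\<close> \<open>k<m\<close> by simp
    moreover have "[:-c,1:] dvd [:-c,1:]^(m-k)" using \<open>k<m\<close> by (simp add: dvd_power)
    ultimately show "poly ((Tm N ^^ k) G) c = 0" by (simp add: poly_eq_0_iff_dvd dvd_trans)
  qed
next
  assume h: "\<forall>k<m. poly ((Tm N ^^ k) G) c = 0"
  then show "[:-c,1:]^m dvd G"
  proof (induction m)
    case 0 then show ?case by simp
  next
    case (Suc m)
    then have "[:-c,1:]^m dvd G" by simp
    then obtain Q where G: "G = [:-c,1:]^m * Q" by blast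
    obtain R where R: "(Tm N ^^ m) ([:-c,1:]^m * Q) = [:-c,1:]^(m-m) * R"
      "poly R c = (fact m / fact (m-m)) / N^m * poly Q c" using Tm_eval[of m m N c Q] assms by auto
    have "poly ((Tm N ^^ m) G) c = 0" using Suc.prems by simp
    then have "poly R c = 0" using R(1) G by simp
    then have "poly Q c = 0" using R(2) assms by simp
    then have "[:-c,1:] dvd Q" by (simp add: poly_eq_0_iff_dvd)
    then obtain Q' where "Q = [:-c,1:] * Q'" by blast
    then have "G = [:-c,1:]^Suc m * Q'" unfolding G by (simp only: power_Suc2 mult.assoc)
    then show ?case by simp
  qed
qed

lemma moment_k: assumes "N > 0"
  shows "(\<integral>x. poly p x * x^k * gw N c x \<partial>lborel) = (\<integral>x. gw N c x \<partial>lborel) * poly ((Tm N ^^ k) (Hop N p)) c"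
proof -
  have e: "poly p x * x^k * gw N c x = poly ([:0,1:]^k * p) x * gw N c x" for x
    by (simp add: poly_power)
  have "(\<integral>x. poly p x * x^k * gw N c x \<partial>lborel) = (\<integral>x. poly ([:0,1:]^k * p) x * gw N c x \<partial>lborel)"
    unfolding e ..
  also have "\<dots> = (\<integral>x. gw N c x \<partial>lborel) * poly (Hop N ([:0,1:]^k * p)) c" by (rule moment_Hop[OF assms])
  also have "Hop N ([:0,1:]^k * p) = (Tm N ^^ k) (Hop N p)" by (rule Hop_xpow) (use assms in simp)
  finally show ?thesis .
qed

lemma orth_iff_dvd: assumes "N > 0"
  shows "(\<forall>k<m. (\<integral>x. poly p x * x^k * gw N c x \<partial>lborel) = 0) \<longleftrightarrow> [:-c,1:]^m dvd Hop N p"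
  using moment_k[OF assms] integral_gw_pos[OF assms, of c] orth_dvd_iff[of N m "Hop N p" c] assms
  by simp


definition Qp :: "real \<Rightarrow> nat \<Rightarrow> nat \<Rightarrow> nat \<Rightarrow> real poly" where
  "Qp a k1 k2 k3 = [:-a,1:]^k1 * [:-0,1:]^k2 * [:-(-a),1:]^k3"

definition od :: "real \<Rightarrow> real \<Rightarrow> nat \<Rightarrow> real poly \<Rightarrow> bool" where
  "od N c m p = (\<forall>k<m. (\<integral>x. poly p x * x^k * gw N c x \<partial>lborel) = 0)"

lemma wt_gw: "wt a N j x = gw N (shift a j) x"
  by (simp add: wt_def gw_def)

lemma orthAll_od:
  "(\<forall>j\<in>{1,2,3}. \<forall>k < sel j k1 k2 k3. (\<integral>x. poly p x * x ^ k * wt a N j x \<partial>lborel) = 0)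
   \<longleftrightarrow> od N a k1 p \<and> od N 0 k2 p \<and> od N (-a) k3 p"
  by (simp add: od_def wt_gw sel_def shift_def)

lemma coprime_lin: assumes "c \<noteq> d" shows "coprime [:-c,1:] ([:-d,1:] :: real poly)"
proof (rule coprimeI)
  fix e assume h: "e dvd [:-c,1:]" "e dvd [:-d,1:]"
  then have "e dvd [:-c,1:] - [:-d,1:]" by (rule dvd_diff)
  moreover have "[:-c,1:] - [:-d,1:] = [:d - c:]" by simp
  moreover have "is_unit [:d - c:]" using assms by (simp add: is_unit_const_poly_iff dvd_field_iff)
  ultimately show "is_unit e" using dvd_unit_imp_unit by metis
qed

lemma Qp_dvd_iff: assumes "a \<noteq> 0"
  shows "Qp a k1 k2 k3 dvd G \<longleftrightarrow> [:-a,1:]^k1 dvd G \<and> [:-0,1:]^k2 dvd G \<and> [:-(-a),1:]^k3 dvd G"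
proof
  assume h: "Qp a k1 k2 k3 dvd G"
  then show "[:-a,1:]^k1 dvd G \<and> [:-0,1:]^k2 dvd G \<and> [:-(-a),1:]^k3 dvd G"
    unfolding Qp_def by (meson dvd_mult_left dvd_mult_right)
next
  assume h: "[:-a,1:]^k1 dvd G \<and> [:-0,1:]^k2 dvd G \<and> [:-(-a),1:]^k3 dvd G"
  have c1: "coprime [:-a,1:] ([:-0,1:] :: real poly)" using assms by (intro coprime_lin) simp
  have c2: "coprime [:-a,1:] ([:-(-a),1:] :: real poly)" using assms by (intro coprime_lin) simp
  have c3: "coprime [:-0,1:] ([:-(-a),1:] :: real poly)" using assms by (intro coprime_lin) simp
  have "[:-a,1:]^k1 * [:-0,1:]^k2 dvd G"
  proof (rule divides_mult)
    show "coprime ([:-a,1:]^k1) ([:-0,1:]^k2 :: real poly)" using c1 by (simp del: minus_zero minus_minus)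
  qed (use h in auto)
  then show "Qp a k1 k2 k3 dvd G" unfolding Qp_def
  proof (rule divides_mult)
    show "coprime ([:-a,1:]^k1 * [:-0,1:]^k2) ([:-(-a),1:]^k3 :: real poly)" using c2 c3 by (simp del: minus_zero minus_minus)
  qed (use h in auto)
qed

lemma od_iff: assumes "N > 0" shows "od N c m p \<longleftrightarrow> [:-c,1:]^m dvd Hop N p"
  unfolding od_def by (rule orth_iff_dvd[OF assms])

lemma orthAll_iff: assumes "a \<noteq> 0" "N > 0"
  shows "od N a k1 p \<and> od N 0 k2 p \<and> od N (-a) k3 p \<longleftrightarrow> Qp a k1 k2 k3 dvd Hop N p"
  using Qp_dvd_iff[OF assms(1)] od_iff[OF assms(2)] by simp

lemma Qp_nz: "Qp a k1 k2 k3 \<noteq> 0"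
  by (simp add: Qp_def del: minus_zero minus_minus)

lemma degree_Qp: "degree (Qp a k1 k2 k3) = k1 + k2 + k3"
  unfolding Qp_def
  by (subst degree_mult_eq, simp del: minus_zero minus_minus, simp del: minus_zero minus_minus)+
     (simp add: degree_power_eq del: minus_zero minus_minus)

lemma lead_Qp: "lead_coeff (Qp a k1 k2 k3) = 1"
  unfolding Qp_def by (simp add: lead_coeff_mult lead_coeff_power del: minus_zero minus_minus)

lemma dvd_same_eq: fixes G Q :: "real poly"
  assumes "Q dvd G" "degree G = degree Q" "lead_coeff G = lead_coeff Q"
  shows "G = Q"
proof (rule ccontr)
  assume "G \<noteq> Q"
  then have nz: "G - Q \<noteq> 0" by simp
  have "Q dvd G - Q" using assms(1) by (simp add: dvd_diff)
  then have "degree Q \<le> degree (G - Q)" using nz Qp_nz by (metis dvd_imp_degree_le)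
  moreover have "coeff (G - Q) i = 0" if "i \<ge> degree Q" for i
  proof (cases "i = degree Q")
    case True then show ?thesis using assms by simp
  next
    case False then have "i > degree Q" "i > degree G" using that assms by auto
    then show ?thesis by (simp add: coeff_eq_0)
  qed
  ultimately have "coeff (G - Q) (degree (G - Q)) = 0" by blast
  then show False using nz leading_coeff_0_iff by blast
qed

lemma mop_char: assumes "a \<noteq> 0" "N > 0"
  shows "Hop N (mop a N k1 k2 k3) = Qp a k1 k2 k3"
proof -
  obtain p0 where p0: "Hop N p0 = Qp a k1 k2 k3" using Hop_surj by blast
  let ?P = "\<lambda>p. degree p = k1 + k2 + k3 \<and> lead_coeff p = 1 \<and>
     (\<forall>j\<in>{1,2,3}. \<forall>k < sel j k1 k2 k3. (\<integral>x. poly p x * x ^ k * wt a N j x \<partial>lborel) = 0)"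
  have d0: "degree p0 = k1 + k2 + k3" using degree_Hop[of N p0] p0 degree_Qp by metis
  have l0: "lead_coeff p0 = 1" using lead_Hop[of N p0] p0 lead_Qp by metis
  have "?P p0" unfolding orthAll_od orthAll_iff[OF assms]
    using p0 d0 l0 by simp
  moreover have "p = p0" if "?P p" for p
  proof -
    have "Qp a k1 k2 k3 dvd Hop N p" using that unfolding orthAll_od orthAll_iff[OF assms] by simp
    then have "Hop N p = Qp a k1 k2 k3"
    proof (rule dvd_same_eq)
      show "degree (Hop N p) = degree (Qp a k1 k2 k3)" using that degree_Hop[of N p] degree_Qp by metis
      show "lead_coeff (Hop N p) = lead_coeff (Qp a k1 k2 k3)" using that lead_Hop[of N p] lead_Qp by metis
    qed
    then show ?thesis using p0 Hop_inj by metis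
  qed
  ultimately have "mop a N k1 k2 k3 = p0" unfolding mop_def by (rule the_equality)
  then show ?thesis using p0 by simp
qed

lemma mop_od: assumes "a \<noteq> 0" "N > 0"
  shows "od N a k1 (mop a N k1 k2 k3) \<and> od N 0 k2 (mop a N k1 k2 k3) \<and> od N (-a) k3 (mop a N k1 k2 k3)"
  unfolding orthAll_iff[OF assms] mop_char[OF assms] by simp

lemma Hop_R: assumes "N \<noteq> 0"
  shows "Hop N ([:-c,1:] * p - smult (1/N) (pderiv p)) = [:-c,1:] * Hop N p"
proof -
  have e: "[:-c,1:] * p = [:0,1:] * p - smult c p" by simp
  have "Hop N ([:-c,1:] * p - smult (1/N) (pderiv p)) = Hop N ([:0,1:] * p) - smult c (Hop N p) - smult (1/N) (pderiv (Hop N p))"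
    unfolding e by (simp only: Hop_diff Hop_smult Hop_pderiv)
  also have "\<dots> = [:0,1:] * Hop N p - smult c (Hop N p)" using Hop_x[OF assms, of p] by simp
  also have "\<dots> = [:-c,1:] * Hop N p" by simp
  finally show ?thesis .
qed

lemma pderiv_triple:
  fixes A B C :: "real poly"
  assumes "pderiv A = 1" "pderiv B = 1" "pderiv C = 1"
  shows "pderiv (A^Suc m1 * B^Suc m2 * C^Suc m3) =
    smult (of_nat (Suc m1)) (A^m1 * B^Suc m2 * C^Suc m3) + smult (of_nat (Suc m2)) (A^Suc m1 * B^m2 * C^Suc m3)
    + smult (of_nat (Suc m3)) (A^Suc m1 * B^Suc m2 * C^m3)"
  by (simp only: pderiv_mult pderiv_power_Suc assms) (simp add: algebra_simps)


definition Cf :: "real \<Rightarrow> real \<Rightarrow> real poly \<Rightarrow> complex \<Rightarrow> complex" where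
  "Cf N c p z = (\<integral>s. complex_of_real (poly p s * gw N c s) / (of_real s - z) \<partial>lborel)"

lemma norm_sz: "Im z \<noteq> 0 \<Longrightarrow> \<bar>Im z\<bar> \<le> cmod (of_real s - z)"
  using abs_Im_le_cmod[of "of_real s - z"] by simp

lemma sz_nz: "Im z \<noteq> 0 \<Longrightarrow> complex_of_real s - z \<noteq> 0"
  using norm_sz[of z s] by auto

lemma int_bounded:
  fixes h :: "real \<Rightarrow> complex"
  assumes "N > 0" "continuous_on UNIV h" "\<And>s. cmod (h s) \<le> B"
  shows "integrable lborel (\<lambda>s. complex_of_real (poly p s * gw N c s) * h s)"
proof (rule Bochner_Integration.integrable_bound)
  show "integrable lborel (\<lambda>s. B * (poly p s * gw N c s))"
    by (intro integrable_mult_right integrable_poly_gw[OF assms(1)])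
  have B: "B \<ge> 0" using assms(3)[of 0] norm_ge_zero order_trans by blast
  show "AE s in lborel. norm (complex_of_real (poly p s * gw N c s) * h s) \<le> norm (B * (poly p s * gw N c s))"
  proof (rule AE_I2)
    fix s
    have "norm (complex_of_real (poly p s * gw N c s) * h s) = \<bar>poly p s * gw N c s\<bar> * cmod (h s)"
      by (simp only: norm_mult norm_of_real)
    also have "\<dots> \<le> \<bar>poly p s * gw N c s\<bar> * B" by (intro mult_left_mono assms(3)) simp
    also have "\<dots> = norm (B * (poly p s * gw N c s))" using B by (simp add: abs_mult)
    finally show "norm (complex_of_real (poly p s * gw N c s) * h s) \<le> norm (B * (poly p s * gw N c s))" .
  qed
  show "(\<lambda>s. complex_of_real (poly p s * gw N c s) * h s) \<in> borel_measurable lborel"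
    using assms(2) unfolding gw_def by (auto intro!: borel_measurable_continuous_onI continuous_intros)
qed

lemma int_C:
  assumes "N > 0" "Im z \<noteq> 0"
  shows "integrable lborel (\<lambda>s. complex_of_real (poly p s * gw N c s) / (of_real s - z))"
proof -
  have "integrable lborel (\<lambda>s. complex_of_real (poly p s * gw N c s) * (1 / (of_real s - z)))"
  proof (rule int_bounded[OF assms(1)])
    show "continuous_on UNIV (\<lambda>s. 1 / (complex_of_real s - z))"
      using sz_nz[OF assms(2)] by (intro continuous_intros) auto
    show "cmod (1 / (complex_of_real s - z)) \<le> 1 / \<bar>Im z\<bar>" for s
      using norm_sz[OF assms(2), of s] assms(2) by (simp add: norm_divide frac_le)
  qed
  then show ?thesis by simp
qed

lemma int_C2:
  assumes "N > 0" "Im z \<noteq> 0"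
  shows "integrable lborel (\<lambda>s. complex_of_real (poly p s * gw N c s) / (of_real s - z)^2)"
proof -
  have "integrable lborel (\<lambda>s. complex_of_real (poly p s * gw N c s) * (1 / (of_real s - z)^2))"
  proof (rule int_bounded[OF assms(1)])
    show "continuous_on UNIV (\<lambda>s. 1 / (complex_of_real s - z)^2)"
      using sz_nz[OF assms(2)] by (intro continuous_intros) auto
    show "cmod (1 / (complex_of_real s - z)^2) \<le> 1 / \<bar>Im z\<bar>^2" for s
    proof -
      have "\<bar>Im z\<bar>^2 \<le> cmod (complex_of_real s - z)^2"
        using norm_sz[OF assms(2), of s] by (intro power_mono) auto
      moreover have "0 < \<bar>Im z\<bar>^2" using assms(2) by simp
      ultimately have "1 / cmod (complex_of_real s - z)^2 \<le> 1 / \<bar>Im z\<bar>^2"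
        by (intro frac_le) auto
      then show ?thesis by (simp add: norm_divide norm_power)
    qed
  qed
  then show ?thesis by simp
qed

lemma Cf_add: assumes "N > 0" "Im z \<noteq> 0" shows "Cf N c (p + q) z = Cf N c p z + Cf N c q z"
proof -
  have "Cf N c (p + q) z = (\<integral>s. complex_of_real (poly p s * gw N c s) / (of_real s - z)
        + complex_of_real (poly q s * gw N c s) / (of_real s - z) \<partial>lborel)"
    unfolding Cf_def by (rule Bochner_Integration.integral_cong) (auto simp: algebra_simps add_divide_distrib)
  also have "\<dots> = Cf N c p z + Cf N c q z"
    unfolding Cf_def by (rule Bochner_Integration.integral_add) (intro int_C assms)+
  finally show ?thesis .
qed

lemma Cf_smult: "Cf N c (smult r p) z = of_real r * Cf N c p z"
proof -
  have e: "complex_of_real (poly (smult r p) s * gw N c s) / (of_real s - z) =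
      of_real r * (complex_of_real (poly p s * gw N c s) / (of_real s - z))" for s
  proof -
    have "complex_of_real (poly (smult r p) s * gw N c s) = of_real r * complex_of_real (poly p s * gw N c s)"
      by (simp del: of_real_mult add: mult.assoc of_real_mult[symmetric])
    then show ?thesis by simp
  qed
  show ?thesis unfolding Cf_def e by (rule integral_mult_right_zero)
qed

lemma Cf_diff: assumes "N > 0" "Im z \<noteq> 0" shows "Cf N c (p - q) z = Cf N c p z - Cf N c q z"
proof -
  have "Cf N c (p - q) z = Cf N c (p + smult (-1) q) z" by simp
  also have "\<dots> = Cf N c p z - Cf N c q z" by (simp only: Cf_add[OF assms] Cf_smult) simp
  finally show ?thesis .
qed

lemma Cf_x: assumes "N > 0" "Im z \<noteq> 0"
  shows "Cf N c ([:0,1:] * p) z = z * Cf N c p z + of_real (\<integral>s. poly p s * gw N c s \<partial>lborel)"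
proof -
  have e: "complex_of_real (poly ([:0,1:] * p) s * gw N c s) / (of_real s - z) =
      complex_of_real (poly p s * gw N c s) + z * (complex_of_real (poly p s * gw N c s) / (of_real s - z))" for s
    using sz_nz[OF assms(2), of s] by (simp add: field_simps)
  have i1: "integrable lborel (\<lambda>s. complex_of_real (poly p s * gw N c s))"
    by (simp only: complex_of_real_integrable_eq integrable_poly_gw[OF assms(1)])
  have "Cf N c ([:0,1:] * p) z = (\<integral>s. complex_of_real (poly p s * gw N c s) \<partial>lborel) + (\<integral>s. z * (complex_of_real (poly p s * gw N c s) / (of_real s - z)) \<partial>lborel)"
  proof -
    have i2: "integrable lborel (\<lambda>s. z * (complex_of_real (poly p s * gw N c s) / (of_real s - z)))"
      by (intro integrable_mult_right int_C[OF assms])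
    show ?thesis unfolding Cf_def e by (rule Bochner_Integration.integral_add[OF i1 i2])
  qed
  then show ?thesis unfolding Cf_def by (simp del: of_real_mult times_divide_eq_right add: add.commute)
qed

lemma deriv_pgw: "((\<lambda>x. poly p x * gw N c x) has_real_derivative poly (pderiv p - smult N ([:-c,1:] * p)) x * gw N c x) (at x)"
proof -
  have gd: "(gw N c has_real_derivative (- N * (x - c)) * gw N c x) (at x)"
  proof -
    have "((\<lambda>x::real. x^2/2 - c*x) has_real_derivative (x - c)) (at x)"
      using DERIV_diff[OF DERIV_divide[OF DERIV_pow[of 2 x] DERIV_const[of 2]] DERIV_cmult[OF DERIV_ident, of c]]
      by simp
    then have "((\<lambda>x. - N * (x^2/2 - c*x)) has_real_derivative (- N * (x - c))) (at x)"
      using DERIV_cmult by blast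
    from DERIV_exp[THEN DERIV_chain2, OF this] show ?thesis unfolding gw_def by (simp add: mult_ac)
  qed
  show ?thesis
    using DERIV_mult[OF poly_DERIV[of p x] gd] by (simp add: algebra_simps)
qed


lemma inv_deriv: "w - z \<noteq> 0 \<Longrightarrow> ((\<lambda>w. 1 / (w - z)) has_field_derivative (- 1 / (w - z)^2)) (at (w::complex))"
  by (auto intro!: derivative_eq_intros simp: power2_eq_square field_simps)

lemma Cf_ibp: assumes N: "N > 0" and z: "Im z \<noteq> 0"
  shows "(\<integral>s. complex_of_real (poly p s * gw N c s) / (of_real s - z)^2 \<partial>lborel)
       = Cf N c (pderiv p - smult N ([:-c,1:] * p)) z"
proof -
  define q where "q = pderiv p - smult N ([:-c,1:] * p)"
  define A where "A s = complex_of_real (poly p s * gw N c s) / (of_real s - z)^2" for s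
  define B where "B s = complex_of_real (poly q s * gw N c s) / (of_real s - z)" for s
  define F where "F s = complex_of_real (poly p s * gw N c s) * (1 / (of_real s - z))" for s
  have nz: "complex_of_real s - z \<noteq> 0" for s by (rule sz_nz[OF z])
  have dF: "(F has_vector_derivative (B s - A s)) (at s)" for s
  proof -
    have d1: "((\<lambda>s. complex_of_real (poly p s * gw N c s)) has_vector_derivative
               complex_of_real (poly q s * gw N c s)) (at s)"
      unfolding q_def by (intro has_vector_derivative_of_real deriv_pgw)
    have d2: "((\<lambda>s. 1 / (complex_of_real s - z)) has_vector_derivative (- 1 / (of_real s - z)^2)) (at s)"
      by (rule has_vector_derivative_real_field) (rule inv_deriv[OF nz])
    have "(F has_vector_derivative
        (complex_of_real (poly p s * gw N c s) * (- 1 / (of_real s - z)^2) +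
         complex_of_real (poly q s * gw N c s) * (1 / (of_real s - z)))) (at s)"
      unfolding F_def by (rule has_vector_derivative_mult[OF d1 d2])
    moreover have "complex_of_real (poly p s * gw N c s) * (- 1 / (of_real s - z)^2) +
         complex_of_real (poly q s * gw N c s) * (1 / (of_real s - z)) = B s - A s"
      unfolding A_def B_def by (simp del: of_real_mult)
    ultimately show ?thesis by simp
  qed
  have iA: "integrable lborel A" unfolding A_def by (rule int_C2[OF N z])
  have iB: "integrable lborel B" unfolding B_def by (rule int_C[OF N z])
  have Fnorm: "norm (F s) \<le> \<bar>poly p s * gw N c s\<bar> / \<bar>Im z\<bar>" for s
  proof -
    have "norm (F s) = \<bar>poly p s * gw N c s\<bar> / cmod (of_real s - z)"
      unfolding F_def by (simp only: norm_mult norm_of_real norm_divide norm_one) simp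
    also have "\<dots> \<le> \<bar>poly p s * gw N c s\<bar> / \<bar>Im z\<bar>"
    proof (rule divide_left_mono)
      show "\<bar>Im z\<bar> \<le> cmod (complex_of_real s - z)" by (rule norm_sz[OF z])
      have "0 < \<bar>Im z\<bar>" using z by simp
      moreover have "0 < cmod (complex_of_real s - z)" using norm_sz[OF z, of s] \<open>0 < \<bar>Im z\<bar>\<close> by linarith
      ultimately show "0 < cmod (complex_of_real s - z) * \<bar>Im z\<bar>" by (simp only: mult_pos_pos)
    qed simp
    finally show ?thesis .
  qed
  have lim: "((\<lambda>s. \<bar>poly p s * gw N c s\<bar> / \<bar>Im z\<bar>) \<longlongrightarrow> 0) F'" if "((\<lambda>s. poly p s * gw N c s) \<longlongrightarrow> 0) F'" for F'
    by (intro tendsto_divide_zero tendsto_rabs_zero that)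
  have "(\<integral>s. B s - A s \<partial>lborel) = 0"
  proof (rule FTC_R[OF dF])
    show "isCont (\<lambda>s. B s - A s) s" for s
      unfolding A_def B_def gw_def using nz by (intro continuous_intros) auto
    show "integrable lborel (\<lambda>s. B s - A s)" by (rule Bochner_Integration.integrable_diff[OF iB iA])
    show "(F \<longlongrightarrow> 0) at_top"
      by (rule Lim_null_comparison[OF always_eventually lim]) (use Fnorm decay_poly_gw[OF N] in auto)
    show "(F \<longlongrightarrow> 0) at_bot"
      by (rule Lim_null_comparison[OF always_eventually lim]) (use Fnorm decay_poly_gw[OF N] in auto)
  qed
  then have "(\<integral>s. B s \<partial>lborel) - (\<integral>s. A s \<partial>lborel) = 0"
    using iA iB by (simp add: Bochner_Integration.integral_diff)
  then have eq: "(\<integral>s. A s \<partial>lborel) = (\<integral>s. B s \<partial>lborel)" by simp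
  show ?thesis unfolding Cf_def q_def[symmetric] using eq unfolding A_def B_def .
qed


lemma alg_id: fixes f u v :: complex assumes "u \<noteq> 0" "v \<noteq> 0" "v - u \<noteq> 0"
  shows "(f/u - f/v)/(v - u) - f/v^2 = f * ((v - u) / (u * v^2))"
proof -
  have "(f/u - f/v)/(v - u) = f/(u * v)" using assms by (simp add: field_simps)
  moreover have "f/(u * v) - f/v^2 = f * ((v - u) / (u * v^2))" using assms by (simp add: field_simps power2_eq_square)
  ultimately show ?thesis by simp
qed

lemma Cf_deriv0: assumes N: "N > 0" and z: "Im z \<noteq> 0"
  shows "(Cf N c p has_field_derivative
          (\<integral>s. complex_of_real (poly p s * gw N c s) / (of_real s - z)^2 \<partial>lborel)) (at z)"
proof -
  define fc where "fc s = complex_of_real (poly p s * gw N c s)" for s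
  define D where "D = (\<integral>s. fc s / (of_real s - z)^2 \<partial>lborel)"
  define d where "d = \<bar>Im z\<bar>"
  have d0: "d > 0" using z by (simp add: d_def)
  define M where "M = (\<integral>s. \<bar>poly p s * gw N c s\<bar> \<partial>lborel)"
  define K where "K = M * (2 / d^3)"
  have iM: "integrable lborel (\<lambda>s. \<bar>poly p s * gw N c s\<bar>)"
    by (intro integrable_abs integrable_poly_gw[OF N])
  have key: "norm ((Cf N c p w - Cf N c p z) / (w - z) - D) \<le> K * cmod (w - z)"
    if w1: "w \<noteq> z" and w2: "cmod (w - z) < d / 2" for w
  proof -
    have "\<bar>Im w - Im z\<bar> \<le> cmod (w - z)" using abs_Im_le_cmod[of "w - z"] by simp
    then have imw: "\<bar>Im w\<bar> > d / 2" using w2 unfolding d_def by linarith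
    then have wz: "Im w \<noteq> 0" using d0 by auto
    have nzw: "complex_of_real s - w \<noteq> 0" for s by (rule sz_nz[OF wz])
    have nzz: "complex_of_real s - z \<noteq> 0" for s by (rule sz_nz[OF z])
    define h where "h s = (w - z) / ((of_real s - w) * (of_real s - z)^2)" for s
    have hb: "cmod (h s) \<le> cmod (w - z) * (2 / d^3)" for s
    proof -
      have a1: "d / 2 \<le> cmod (of_real s - w)" using norm_sz[OF wz, of s] imw by linarith
      have a2: "d \<le> cmod (of_real s - z)" using norm_sz[OF z, of s] unfolding d_def .
      have "d / 2 * d^2 \<le> cmod (of_real s - w) * cmod (of_real s - z)^2"
        using a1 a2 d0 by (intro mult_mono power_mono) auto
      moreover have "0 < d / 2 * d^2" using d0 by simp
      ultimately have "cmod (w - z) / (cmod (of_real s - w) * cmod (of_real s - z)^2) \<le> cmod (w - z) / (d / 2 * d^2)"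
        by (intro divide_left_mono) auto
      also have "\<dots> = cmod (w - z) * (2 / d^3)" by (simp add: power2_eq_square power3_eq_cube)
      finally show ?thesis unfolding h_def by (simp add: norm_divide norm_mult norm_power)
    qed
    have ihc: "continuous_on UNIV h" unfolding h_def using nzw nzz by (intro continuous_intros) auto
    have iE: "integrable lborel (\<lambda>s. fc s * h s)" unfolding fc_def by (rule int_bounded[OF N ihc hb])
    have iw: "integrable lborel (\<lambda>s. fc s / (of_real s - w))" unfolding fc_def by (rule int_C[OF N wz])
    have iz: "integrable lborel (\<lambda>s. fc s / (of_real s - z))" unfolding fc_def by (rule int_C[OF N z])
    have iz2: "integrable lborel (\<lambda>s. fc s / (of_real s - z)^2)" unfolding fc_def by (rule int_C2[OF N z])
    have "(Cf N c p w - Cf N c p z) / (w - z) - D =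
        (\<integral>s. (fc s / (of_real s - w) - fc s / (of_real s - z)) / (w - z) \<partial>lborel) - D"
      unfolding Cf_def fc_def[symmetric] using iw iz by (simp add: Bochner_Integration.integral_diff)
    also have "\<dots> = (\<integral>s. (fc s / (of_real s - w) - fc s / (of_real s - z)) / (w - z) - fc s / (of_real s - z)^2 \<partial>lborel)"
      unfolding D_def
      by (rule Bochner_Integration.integral_diff[symmetric])
         (use iw iz iz2 in \<open>auto intro!: Bochner_Integration.integrable_diff\<close>)
    also have "\<dots> = (\<integral>s. fc s * h s \<partial>lborel)"
    proof (rule Bochner_Integration.integral_cong[OF refl])
      fix s
      show "(fc s / (of_real s - w) - fc s / (of_real s - z)) / (w - z) - fc s / (of_real s - z)^2 = fc s * h s"
        unfolding h_def using alg_id[OF nzw[of s] nzz[of s], of "fc s"] w1 by simp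
    qed
    finally have eq: "(Cf N c p w - Cf N c p z) / (w - z) - D = (\<integral>s. fc s * h s \<partial>lborel)" .
    have "norm (\<integral>s. fc s * h s \<partial>lborel) \<le> (\<integral>s. \<bar>poly p s * gw N c s\<bar> * (cmod (w - z) * (2 / d^3)) \<partial>lborel)"
    proof (rule Bochner_Integration.integral_norm_bound_integral[OF iE])
      show "integrable lborel (\<lambda>s. \<bar>poly p s * gw N c s\<bar> * (cmod (w - z) * (2 / d^3)))"
        by (intro integrable_mult_left iM)
      fix s
      have "norm (fc s * h s) = \<bar>poly p s * gw N c s\<bar> * cmod (h s)"
        unfolding fc_def by (simp only: norm_mult norm_of_real)
      also have "\<dots> \<le> \<bar>poly p s * gw N c s\<bar> * (cmod (w - z) * (2 / d^3))"
        by (intro mult_left_mono hb) simp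
      finally show "norm (fc s * h s) \<le> \<bar>poly p s * gw N c s\<bar> * (cmod (w - z) * (2 / d^3))" .
    qed
    also have "\<dots> = K * cmod (w - z)" unfolding K_def M_def by simp
    finally show ?thesis using eq by simp
  qed
  have "((\<lambda>w. (Cf N c p w - Cf N c p z) / (w - z) - D) \<longlongrightarrow> 0) (at z)"
  proof (rule Lim_null_comparison)
    show "\<forall>\<^sub>F w in at z. norm ((Cf N c p w - Cf N c p z) / (w - z) - D) \<le> K * cmod (w - z)"
      unfolding eventually_at using d0 key by (intro exI[of _ "d/2"]) (auto simp: dist_norm)
    have "((\<lambda>w. K * cmod (w - z)) \<longlongrightarrow> K * cmod (z - z)) (at z)"
      by (intro tendsto_intros)
    then show "((\<lambda>w. K * cmod (w - z)) \<longlongrightarrow> 0) (at z)" by simp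
  qed
  then have "((\<lambda>w. (Cf N c p w - Cf N c p z) / (w - z)) \<longlongrightarrow> D) (at z)" by (rule LIM_zero_cancel)
  then show ?thesis unfolding has_field_derivative_iff D_def fc_def .
qed

lemma Cf_deriv: assumes N: "N > 0" and z: "Im z \<noteq> 0"
  shows "(Cf N c p has_field_derivative Cf N c (pderiv p - smult N ([:-c,1:] * p)) z) (at z)"
  using Cf_deriv0[OF N z] Cf_ibp[OF N z] by simp


section \<open>Specific relations between the row polynomials\<close>

lemma pderiv_lin0: "pderiv [:-0,1:] = (1::real poly)" by (rule pderiv_lin)
lemma pderiv_lin3: "pderiv [:-(-a),1:] = (1::real poly)" by (rule pderiv_lin)

context
  fixes a N :: real and m1 m2 m3 :: nat
  assumes a: "a > 0" and N: "N > 0"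
begin

lemma a0: "a \<noteq> 0" using a by simp
lemma N0: "N \<noteq> 0" using N by simp

abbreviation "PP \<equiv> mop a N (Suc m1) (Suc m2) (Suc m3)"
abbreviation "PP1 \<equiv> mop a N m1 (Suc m2) (Suc m3)"
abbreviation "PP2 \<equiv> mop a N (Suc m1) m2 (Suc m3)"
abbreviation "PP3 \<equiv> mop a N (Suc m1) (Suc m2) m3"

lemma F3_1: "PP = [:-a,1:] * PP1 - smult (1/N) (pderiv PP1)"
proof (rule Hop_inj[of N])
  show "Hop N PP = Hop N ([:-a,1:] * PP1 - smult (1/N) (pderiv PP1))"
    unfolding Hop_R[OF N0] mop_char[OF a0 N] by (simp only: Qp_def power_Suc mult.assoc)
qed

lemma F3_2: "PP = [:-0,1:] * PP2 - smult (1/N) (pderiv PP2)"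
proof (rule Hop_inj[of N])
  show "Hop N PP = Hop N ([:-0,1:] * PP2 - smult (1/N) (pderiv PP2))"
    unfolding Hop_R[OF N0] mop_char[OF a0 N] by (simp only: Qp_def power_Suc mult_ac)
qed

lemma F3_3: "PP = [:-(-a),1:] * PP3 - smult (1/N) (pderiv PP3)"
proof (rule Hop_inj[of N])
  show "Hop N PP = Hop N ([:-(-a),1:] * PP3 - smult (1/N) (pderiv PP3))"
    unfolding Hop_R[OF N0] mop_char[OF a0 N] by (simp only: Qp_def power_Suc mult_ac)
qed

lemma F2: "pderiv PP = smult (of_nat (Suc m1)) PP1 + smult (of_nat (Suc m2)) PP2 + smult (of_nat (Suc m3)) PP3"
proof (rule Hop_inj[of N])
  show "Hop N (pderiv PP) = Hop N (smult (of_nat (Suc m1)) PP1 + smult (of_nat (Suc m2)) PP2 + smult (of_nat (Suc m3)) PP3)"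
    unfolding Hop_pderiv Hop_add Hop_smult mop_char[OF a0 N] Qp_def
    by (rule pderiv_triple[OF pderiv_lin pderiv_lin0 pderiv_lin3])
qed

lemma od_Suc: "od N c (Suc m) p \<longleftrightarrow> od N c m p \<and> (\<integral>x. poly p x * x^m * gw N c x \<partial>lborel) = 0"
  unfolding od_def using less_Suc_eq by auto

lemma Qp_not_dvd: assumes "Qp a k1 k2 k3 dvd Qp a l1 l2 l3" "l1 + l2 + l3 < k1 + k2 + k3" shows False
proof -
  have "degree (Qp a k1 k2 k3) \<le> degree (Qp a l1 l2 l3)"
    by (rule dvd_imp_degree_le[OF assms(1) Qp_nz])
  then show False using assms(2) by (simp add: degree_Qp)
qed

lemma F4_1: "hh a N 1 m1 (Suc m2) (Suc m3) \<noteq> 0"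
proof
  assume h: "hh a N 1 m1 (Suc m2) (Suc m3) = 0"
  have "(\<integral>x. poly PP1 x * x^m1 * gw N a x \<partial>lborel) = 0"
    using h by (simp add: hh_def sel_def wt_gw shift_def)
  then have "od N a (Suc m1) PP1 \<and> od N 0 (Suc m2) PP1 \<and> od N (-a) (Suc m3) PP1"
    using mop_od[OF a0 N, of m1 "Suc m2" "Suc m3"] od_Suc by blast
  then have "Qp a (Suc m1) (Suc m2) (Suc m3) dvd Qp a m1 (Suc m2) (Suc m3)"
    unfolding orthAll_iff[OF a0 N] mop_char[OF a0 N] .
  then show False by (rule Qp_not_dvd) simp
qed

lemma F4_2: "hh a N 2 (Suc m1) m2 (Suc m3) \<noteq> 0"
proof
  assume h: "hh a N 2 (Suc m1) m2 (Suc m3) = 0"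
  have "(\<integral>x. poly PP2 x * x^m2 * gw N 0 x \<partial>lborel) = 0"
    using h by (simp add: hh_def sel_def wt_gw shift_def)
  then have "od N a (Suc m1) PP2 \<and> od N 0 (Suc m2) PP2 \<and> od N (-a) (Suc m3) PP2"
    using mop_od[OF a0 N, of "Suc m1" m2 "Suc m3"] od_Suc by blast
  then have "Qp a (Suc m1) (Suc m2) (Suc m3) dvd Qp a (Suc m1) m2 (Suc m3)"
    unfolding orthAll_iff[OF a0 N] mop_char[OF a0 N] .
  then show False by (rule Qp_not_dvd) simp
qed

lemma F4_3: "hh a N 3 (Suc m1) (Suc m2) m3 \<noteq> 0"
proof
  assume h: "hh a N 3 (Suc m1) (Suc m2) m3 = 0"
  have "(\<integral>x. poly PP3 x * x^m3 * gw N (-a) x \<partial>lborel) = 0"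
    using h by (simp add: hh_def sel_def wt_gw shift_def)
  then have "od N a (Suc m1) PP3 \<and> od N 0 (Suc m2) PP3 \<and> od N (-a) (Suc m3) PP3"
    using mop_od[OF a0 N, of "Suc m1" "Suc m2" m3] od_Suc by blast
  then have "Qp a (Suc m1) (Suc m2) (Suc m3) dvd Qp a (Suc m1) (Suc m2) m3"
    unfolding orthAll_iff[OF a0 N] mop_char[OF a0 N] .
  then show False by (rule Qp_not_dvd) simp
qed

lemma F5: assumes "j \<in> {1,2,3::nat}" shows "(\<integral>x. poly PP x * gw N (shift a j) x \<partial>lborel) = 0"
proof -
  have o: "od N a (Suc m1) PP \<and> od N 0 (Suc m2) PP \<and> od N (-a) (Suc m3) PP"
    using mop_od[OF a0 N] by blast
  have "od N (shift a j) (Suc 0) PP"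
    using assms o od_Suc[of _ 0] unfolding shift_def od_def by auto
  then show ?thesis unfolding od_def by simp
qed

end


definition V :: "real \<Rightarrow> real \<Rightarrow> nat \<Rightarrow> real poly \<Rightarrow> complex \<Rightarrow> complex" where
  "V a N j p w = (if j = 0 then poly (map_poly of_real p) w * exp (- of_real N * w^2 / 2)
     else (1 / (2 * of_real pi * \<i>)) * Cf N (shift a j) p w * exp (- of_real N * of_real (shift a j) * w))"

lemma mr_add: "(map_poly of_real (p + q) :: complex poly) = map_poly of_real p + map_poly of_real q"
  by (rule poly_eqI) (simp add: coeff_map_poly)
lemma mr_smult: "(map_poly of_real (smult r p) :: complex poly) = smult (of_real r) (map_poly of_real p)"
  by (rule poly_eqI) (simp add: coeff_map_poly)
lemma mr_x: "(map_poly of_real ([:0,1:] * p) :: complex poly) = [:0,1:] * map_poly of_real p"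
  by (rule poly_eqI) (simp add: coeff_map_poly coeff_pCons split: nat.split)
lemma mr_pderiv: "(map_poly of_real (pderiv p) :: complex poly) = pderiv (map_poly of_real p)"
  by (rule poly_eqI) (simp add: coeff_map_poly coeff_pderiv)

lemma V_add: assumes "N > 0" "Im w \<noteq> 0" shows "V a N j (p + q) w = V a N j p w + V a N j q w"
  by (simp add: V_def mr_add Cf_add[OF assms] algebra_simps)

lemma V_smult: "V a N j (smult r p) w = of_real r * V a N j p w"
  by (simp add: V_def mr_smult Cf_smult)

lemma V_diff: assumes "N > 0" "Im w \<noteq> 0" shows "V a N j (p - q) w = V a N j p w - V a N j q w"
proof -
  have "V a N j (p - q) w = V a N j (p + smult (-1) q) w" by simp
  also have "\<dots> = V a N j p w - V a N j q w" by (simp only: V_add[OF assms] V_smult) simp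
  finally show ?thesis .
qed

lemma V_x: assumes "N > 0" "Im w \<noteq> 0" "j = 0 \<or> (\<integral>s. poly p s * gw N (shift a j) s \<partial>lborel) = 0"
  shows "V a N j ([:0,1:] * p) w = w * V a N j p w"
proof (cases "j = 0")
  case True then show ?thesis unfolding V_def mr_x by simp
next
  case False
  then have "(\<integral>s. poly p s * gw N (shift a j) s \<partial>lborel) = 0" using assms(3) by simp
  then show ?thesis unfolding V_def Cf_x[OF assms(1,2)] using False by simp
qed

lemma V_deriv: assumes N: "N > 0" and z: "Im z \<noteq> 0"
  shows "(V a N j p has_field_derivative V a N j (pderiv p - smult N ([:0,1:] * p)) z) (at z)"
proof (cases "j = 0")
  case True
  have d1: "((\<lambda>w. poly (map_poly of_real p) w) has_field_derivative poly (map_poly of_real (pderiv p)) z) (at z)"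
    unfolding mr_pderiv by (rule poly_DERIV)
  have d2: "((\<lambda>w. exp (- of_real N * w^2 / 2)) has_field_derivative exp (- of_real N * z^2 / 2) * (- of_real N * z)) (at z)"
    by (auto intro!: derivative_eq_intros simp: power2_eq_square)
  have "((\<lambda>w. poly (map_poly of_real p) w * exp (- of_real N * w^2 / 2)) has_field_derivative
      poly (map_poly of_real (pderiv p)) z * exp (- of_real N * z^2 / 2) +
      exp (- of_real N * z^2 / 2) * (- of_real N * z) * poly (map_poly of_real p) z) (at z)"
    using DERIV_mult[OF d1 d2] by (simp add: algebra_simps)
  moreover have "V a N j (pderiv p - smult N ([:0,1:] * p)) z =
      poly (map_poly of_real (pderiv p)) z * exp (- of_real N * z^2 / 2) +
      exp (- of_real N * z^2 / 2) * (- of_real N * z) * poly (map_poly of_real p) z"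
  proof -
    have "(map_poly of_real (pderiv p - smult N ([:0,1:] * p)) :: complex poly) =
        map_poly of_real (pderiv p) + smult (- of_real N) ([:0,1:] * map_poly of_real p)"
      by (metis diff_conv_add_uminus mr_add mr_smult mr_x of_real_minus smult_minus_left)
    then show ?thesis using True by (simp add: V_def algebra_simps)
  qed
  moreover have "V a N j p = (\<lambda>w. poly (map_poly of_real p) w * exp (- of_real N * w^2 / 2))"
    using True by (simp add: V_def fun_eq_iff)
  ultimately show ?thesis by simp
next
  case False
  define c where "c = shift a j"
  define K where "K = 1 / (2 * of_real pi * \<i>)"
  have eqV: "V a N j p = (\<lambda>w. K * Cf N c p w * exp (- of_real N * of_real c * w))"
    using False by (simp add: V_def fun_eq_iff K_def c_def)
  have d2: "((\<lambda>w. exp (- of_real N * of_real c * w)) has_field_derivative exp (- of_real N * of_real c * z) * (- of_real N * of_real c)) (at z)"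
    by (auto intro!: derivative_eq_intros)
  have "((\<lambda>w. K * Cf N c p w * exp (- of_real N * of_real c * w)) has_field_derivative
      K * Cf N c (pderiv p - smult N ([:-c,1:] * p)) z * exp (- of_real N * of_real c * z) +
      exp (- of_real N * of_real c * z) * (- of_real N * of_real c) * (K * Cf N c p z)) (at z)"
    using DERIV_mult[OF DERIV_cmult[OF Cf_deriv[OF N z, of c p], of K] d2] by (simp add: algebra_simps)
  moreover have "Cf N c (pderiv p - smult N ([:-c,1:] * p)) z =
      Cf N c (pderiv p - smult N ([:0,1:] * p)) z + of_real N * of_real c * Cf N c p z"
  proof -
    have e: "pderiv p - smult N ([:-c,1:] * p) = (pderiv p - smult N ([:0,1:] * p)) + smult (N * c) p"
      by (simp add: algebra_simps smult_add_right smult_diff_right)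
    show ?thesis unfolding e by (simp only: Cf_add[OF N z] Cf_smult) simp
  qed
  moreover have "V a N j (pderiv p - smult N ([:0,1:] * p)) z = K * Cf N c (pderiv p - smult N ([:0,1:] * p)) z * exp (- of_real N * of_real c * z)"
    using False by (simp add: V_def K_def c_def)
  ultimately show ?thesis unfolding eqV by (simp add: algebra_simps)
qed


lemma mmul4: "mmul A B i j = A i 0 * B 0 j + A i 1 * B 1 j + A i 2 * B 2 j + A i 3 * B 3 j"
  by (simp add: mmul_def eval_nat_numeral)

lemma lt4: "(i::nat) < 4 \<Longrightarrow> i = 0 \<or> i = 1 \<or> i = 2 \<or> i = 3" by auto

lemma mmul_diag_left: "i < 4 \<Longrightarrow> mmul (diag4 d) A i j = d i * A i j"
  using lt4[of i] by (auto simp: mmul4 diag4_def)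

lemma mmul_diag_right: "j < 4 \<Longrightarrow> mmul A (diag4 d) i j = A i j * d j"
  using lt4[of j] by (auto simp: mmul4 diag4_def)

lemma R_gen: fixes P Q :: "real poly" assumes "N \<noteq> 0" "P = [:-c,1:] * Q - smult (1/N) (pderiv Q)"
  shows "pderiv Q - smult N ([:0,1:] * Q) = smult (-N) P + smult (-N*c) Q"
proof -
  have "smult (-N) P = smult (-N) ([:-c,1:] * Q) + smult (N * (1/N)) (pderiv Q)"
    unfolding assms(2) by (simp add: smult_diff_right)
  also have "smult (N * (1/N)) (pderiv Q) = pderiv Q" using assms(1) by simp
  finally have "smult (-N) P = smult (-N) ([:-c,1:] * Q) + pderiv Q" .
  then show ?thesis by (simp add: algebra_simps smult_add_right smult_diff_right)
qed

lemma Psi_V: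
  assumes c1: "cc a N n1 n2 n3 1 \<noteq> 0" and c2: "cc a N n1 n2 n3 2 \<noteq> 0" and c3: "cc a N n1 n2 n3 3 \<noteq> 0"
    and k: "k < 4" and l: "l < 4"
  shows "Psi a N n1 n2 n3 w k l = V a N l (rowpoly a N n1 n2 n3 k) w"
proof -
  have fac: "(if k = 0 then 1 else inverse (cc a N n1 n2 n3 k)) * rowfac a N n1 n2 n3 k = 1"
    using lt4[OF k] c1 c2 c3 by (auto simp: rowfac_def)
  have ct: "cauchy_tr (\<lambda>s. complex_of_real (poly p s * wt a N l s)) w = (1 / (2 * of_real pi * \<i>)) * Cf N (shift a l) p w" for p
    unfolding cauchy_tr_def Cf_def wt_gw ..
  have "Psi a N n1 n2 n3 w k l = (if k = 0 then 1 else inverse (cc a N n1 n2 n3 k)) * rowfac a N n1 n2 n3 k *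
      (if l = 0 then poly (map_poly of_real (rowpoly a N n1 n2 n3 k)) w
       else cauchy_tr (\<lambda>s. of_real (poly (rowpoly a N n1 n2 n3 k) s * wt a N l s)) w) *
      (if l = 0 then exp (- of_real N * w^2 / 2) else exp (- of_real N * of_real (shift a l) * w))"
    unfolding Psi_def mmul_diag_right[OF l] mmul_diag_left[OF k] Ymat_def by (simp add: mult.assoc)
  also have "\<dots> = V a N l (rowpoly a N n1 n2 n3 k) w"
    unfolding fac ct V_def by simp
  finally show ?thesis .
qed

theorem mainTheorem1:
  fixes a N :: real and n1 n2 n3 :: nat
  assumes "a > 0" and "N > 0" and "n1 \<ge> 1" and "n2 \<ge> 1" and "n3 \<ge> 1"
    and "z \<notin> \<real>"
  shows "\<forall>i<4. \<forall>j<4.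
    ((\<lambda>w. Psi a N n1 n2 n3 w i j) has_field_derivative
       mmul (Amat a N n1 n2 n3 z) (Psi a N n1 n2 n3 z) i j) (at z)"
proof (intro allI impI)
  fix i j :: nat assume i: "i < 4" and j: "j < 4"
  have a: "a > 0" and N: "N > 0" using assms by auto
  have N0: "N \<noteq> 0" using N by simp
  define m1 where "m1 = n1 - 1"
  define m2 where "m2 = n2 - 1"
  define m3 where "m3 = n3 - 1"
  have n: "n1 = Suc m1" "n2 = Suc m2" "n3 = Suc m3" using assms(3,4,5) by (simp_all add: m1_def m2_def m3_def)
  have zI: "Im z \<noteq> 0" using assms(6) complex_is_Real_iff by auto
  have pinz: "- 2 * complex_of_real pi * \<i> \<noteq> 0" by simp
  have c1: "cc a N n1 n2 n3 1 \<noteq> 0" using F4_1[OF a N, of m1 m2 m3] pinz by (simp add: cc_def n)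
  have c2: "cc a N n1 n2 n3 2 \<noteq> 0" using F4_2[OF a N, of m1 m2 m3] pinz by (simp add: cc_def n)
  have c3: "cc a N n1 n2 n3 3 \<noteq> 0" using F4_3[OF a N, of m1 m2 m3] pinz by (simp add: cc_def n)
  let ?P = "mop a N (Suc m1) (Suc m2) (Suc m3)"
  let ?P1 = "mop a N m1 (Suc m2) (Suc m3)"
  let ?P2 = "mop a N (Suc m1) m2 (Suc m3)"
  let ?P3 = "mop a N (Suc m1) (Suc m2) m3"
  have rp: "rowpoly a N n1 n2 n3 0 = ?P" "rowpoly a N n1 n2 n3 1 = ?P1"
    "rowpoly a N n1 n2 n3 2 = ?P2" "rowpoly a N n1 n2 n3 3 = ?P3"
    by (simp_all add: rowpoly_def n)
  have PV: "Psi a N n1 n2 n3 w k j = V a N j (rowpoly a N n1 n2 n3 k) w" if "k < 4" for w k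
    by (rule Psi_V[OF c1 c2 c3 that j])
  have fe: "(\<lambda>w. Psi a N n1 n2 n3 w i j) = V a N j (rowpoly a N n1 n2 n3 i)"
    using PV[OF i] by (simp add: fun_eq_iff)
  have rhs: "mmul (Amat a N n1 n2 n3 z) (Psi a N n1 n2 n3 z) i j =
      Amat a N n1 n2 n3 z i 0 * V a N j ?P z + Amat a N n1 n2 n3 z i 1 * V a N j ?P1 z +
      Amat a N n1 n2 n3 z i 2 * V a N j ?P2 z + Amat a N n1 n2 n3 z i 3 * V a N j ?P3 z"
  proof -
    have "Psi a N n1 n2 n3 z 0 j = V a N j ?P z" using PV[of 0 z] rp(1) by simp
    moreover have "Psi a N n1 n2 n3 z 1 j = V a N j ?P1 z" using PV[of 1 z] rp(2) by simp
    moreover have "Psi a N n1 n2 n3 z 2 j = V a N j ?P2 z" using PV[of 2 z] rp(3) by simp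
    moreover have "Psi a N n1 n2 n3 z 3 j = V a N j ?P3 z" using PV[of 3 z] rp(4) by simp
    ultimately show ?thesis unfolding mmul4 by (simp only:)
  qed
  have Vadd: "V a N j (p + q) z = V a N j p z + V a N j q z" for p q by (rule V_add[OF N zI])
  have Vdiff: "V a N j (p - q) z = V a N j p z - V a N j q z" for p q by (rule V_diff[OF N zI])
  have key: "V a N j (pderiv (rowpoly a N n1 n2 n3 i) - smult N ([:0,1:] * rowpoly a N n1 n2 n3 i)) z =
      mmul (Amat a N n1 n2 n3 z) (Psi a N n1 n2 n3 z) i j"
  proof -
    consider "i = 0" | "i = 1" | "i = 2" | "i = 3" using lt4[OF i] by blast
    then show ?thesis
    proof cases
      case 1
      have x: "V a N j ([:0,1:] * ?P) z = z * V a N j ?P z"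
      proof (rule V_x[OF N zI])
        show "j = 0 \<or> (\<integral>s. poly ?P s * gw N (shift a j) s \<partial>lborel) = 0"
          using F5[OF a N, of j] lt4[OF j] by auto
      qed
      have "V a N j (pderiv ?P - smult N ([:0,1:] * ?P)) z =
          of_nat (Suc m1) * V a N j ?P1 z + of_nat (Suc m2) * V a N j ?P2 z + of_nat (Suc m3) * V a N j ?P3 z
          - of_real N * (z * V a N j ?P z)"
        unfolding F2[OF a N] Vdiff Vadd V_smult x by simp
      then show ?thesis unfolding rhs using 1 rp N0 by (simp add: Amat_def n algebra_simps)
    next
      case 2
      have e: "pderiv ?P1 - smult N ([:0,1:] * ?P1) = smult (-N) ?P + smult (-N*a) ?P1"
        by (rule R_gen[OF N0 F3_1[OF a N]])
      show ?thesis unfolding rhs using 2 by (simp only: rp e Vadd V_smult) (simp add: Amat_def)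
    next
      case 3
      have e: "pderiv ?P2 - smult N ([:0,1:] * ?P2) = smult (-N) ?P + smult (-N*0) ?P2"
        by (rule R_gen[OF N0 F3_2[OF a N]])
      show ?thesis unfolding rhs using 3 by (simp only: rp e Vadd V_smult) (simp add: Amat_def)
    next
      case 4
      have e: "pderiv ?P3 - smult N ([:0,1:] * ?P3) = smult (-N) ?P + smult (-N*(-a)) ?P3"
        by (rule R_gen[OF N0 F3_3[OF a N]])
      show ?thesis unfolding rhs using 4 by (simp only: rp e Vadd V_smult) (simp add: Amat_def)
    qed
  qed
  show "((\<lambda>w. Psi a N n1 n2 n3 w i j) has_field_derivative
       mmul (Amat a N n1 n2 n3 z) (Psi a N n1 n2 n3 z) i j) (at z)"
    unfolding fe key[symmetric] by (rule V_deriv[OF N zI])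
qed


end
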